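(* Let $n\ge2$, let $k\in\mathbb{N}$ be the exponent of the largest power of $2$ dividing $n$, let $n_0=n/2^k$, and let $n_0=\sum_{i=1}^{\ell}2^{m_i}$ with $\ell\ge1$ and $m_1>\cdots>m_{\ell-1}>m_\ell=0$ be its binary expansion. (a) If $\ell=1$ (i.e. $n=2^k$), then $QB(n)=\{(n/2,n/2)\}$. (b) If $\ell>1$, then $QB(n)$ consists exactly of the following pairs, which are pairwise distinct: (b.1) the pair $\bigl(2^k(\sum_{i=1}^{\ell-1}2^{m_i-1}+1),\ 2^k\sum_{i=1}^{\ell-1}2^{m_i-1}\bigr)$; (b.2) for every $j\in\{2,\dots,\ell-1\}$ with $m_j>m_{j+1}+1$, the pair $\bigl(2^k(\sum_{i=1}^{j-1}2^{m_i-1}+2^{m_j}),\ n-2^k(\sum_{i=1}^{j-1}2^{m_i-1}+2^{m_j})\bigr)$; (b.3) for every $j\in\{2,\dots,\ell-1\}$ with $m_j<m_{j-1}-1$, the pair $\bigl(n-2^k\sum_{i=1}^{j-1}2^{m_i-1},\ 2^k\sum_{i=1}^{j-1}2^{m_i-1}\bigr)$; (b.4) if $k\ge1$, the pair $(n/2,n/2)$.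
   Context: Bifurcating trees: rooted trees in which every internal node has exactly two children; $\mathcal{T}_n$ is the set of isomorphism classes of bifurcating trees with $n$ leaves. The Colless index is $\mathcal{C}(T)=\sum_{v}|\kappa_T(v_1)-\kappa_T(v_2)|$, summed over internal nodes $v$ with children $v_1,v_2$, where $\kappa_T(w)$ is the number of leaves descending from $w$; $c_n=\min\{\mathcal{C}(T):T\in\mathcal{T}_n\}$. For $n\ge2$, $QB(n)=\{(n_a,n_b)\in\mathbb{N}^2: n_a\ge n_b\ge1,\ n_a+n_b=n,\ c_{n_a}+c_{n_b}+n_a-n_b=c_n\}$. *)

theory Defs
  imports Main
begin

text \<open>Trees are represented up to labelling;
  the Colless index is invariant under isomorphism, so the minimum over
  concrete trees equals the minimum over isomorphism classes.\<close>
datatype btree = Leaf | Node btree btree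

fun leaves :: "btree \<Rightarrow> nat" where
  "leaves Leaf = 1"
| "leaves (Node l r) = leaves l + leaves r"

fun colless :: "btree \<Rightarrow> nat" where
  "colless Leaf = 0"
| "colless (Node l r) = colless l + colless r
      + nat \<bar>int (leaves l) - int (leaves r)\<bar>"

definition min_colless :: "nat \<Rightarrow> nat" where
  "min_colless n = (LEAST c. \<exists>t. leaves t = n \<and> colless t = c)"

definition QB :: "nat \<Rightarrow> (nat \<times> nat) set" where
  "QB n = {(na, nb). na \<ge> nb \<and> nb \<ge> 1 \<and> na + nb = n \<and>
              min_colless na + min_colless nb + (na - nb) = min_colless n}"

datatype qb_label = B1 | B2 nat | B3 nat | B4

end

theory Submission
  imports Defs
begin

fun cb :: "nat \<Rightarrow> nat" where
  "cb n = (if n \<le> 1 then 0 else cb ((n+1) div 2) + cb (n div 2) + n mod 2)"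

declare cb.simps[simp del]

definition ce :: "nat \<Rightarrow> int" where
  "ce n = (if n = 0 then -1 else int (cb n))"

lemma ce_rec: "n \<ge> 1 \<Longrightarrow> ce n = ce ((n+1) div 2) + ce (n div 2) + int (n mod 2)"
proof (cases "n = 1")
  case True thus ?thesis by (simp add: ce_def cb.simps)
next
  case False
  assume "n \<ge> 1"
  with False have "n \<ge> 2" by simp
  hence "(n+1) div 2 \<noteq> 0" "n div 2 \<noteq> 0" by auto
  with \<open>n\<ge>2\<close> show ?thesis by (subst (1) ce_def, subst cb.simps) (simp add: ce_def)
qed

definition D :: "nat \<Rightarrow> nat \<Rightarrow> int" where
  "D a b = ce a + ce b + \<bar>int a - int b\<bar> - ce (a+b)"

lemma D_sym: "D a b = D b a"
  unfolding D_def by (simp add: add.commute abs_minus_commute)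

lemma D_zero: "a \<ge> 1 \<Longrightarrow> D a 0 = int a - 1"
  unfolding D_def by (simp add: ce_def)

lemma ce_double: "p \<ge> 1 \<Longrightarrow> ce (2*p) = 2 * ce p"
  using ce_rec[of "2*p"] by simp

lemma ce_odd: "ce (2*p+1) = ce (p+1) + ce p + 1"
  using ce_rec[of "2*p+1"] by simp

lemma D_ee: "p \<ge> 1 \<Longrightarrow> q \<ge> 1 \<Longrightarrow> D (2*p) (2*q) = 2 * D p q"
proof -
  assume "p \<ge> 1" "q \<ge> 1"
  have e: "2*p + 2*q = 2*(p+q)" by simp
  have c: "ce (2*(p+q)) = 2 * ce (p+q)" using \<open>p \<ge> 1\<close> by (intro ce_double) simp
  have a: "\<bar>int (2*p) - int (2*q)\<bar> = 2 * \<bar>int p - int q\<bar>" by (simp add: abs_if)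
  show ?thesis using \<open>p \<ge> 1\<close> \<open>q \<ge> 1\<close> unfolding D_def e c a ce_double[OF \<open>p \<ge> 1\<close>] ce_double[OF \<open>q \<ge> 1\<close>]
    by simp
qed

lemma D_oo: "D (2*p+1) (2*q+1) = D (p+1) q + D p (q+1) + (if p = q then 0 else 2)"
proof -
  have e: "2*p+1 + (2*q+1) = 2*(p+q+1)" by simp
  have c: "ce (2*(p+q+1)) = 2 * ce (p+q+1)" by (intro ce_double) simp
  have e2: "p + 1 + q = p+q+1" "p + (q+1) = p+q+1" by simp_all
  show ?thesis unfolding D_def e c e2 ce_odd by (simp add: abs_if)
qed

lemma D_oe: "q \<ge> 1 \<Longrightarrow> D (2*p+1) (2*q) = D (p+1) q + D p q"
proof -
  assume q: "q \<ge> 1"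
  have e: "2*p+1 + 2*q = 2*(p+q)+1" by simp
  have e2: "p + 1 + q = p+q+1" by simp
  show ?thesis unfolding D_def e e2 ce_odd ce_double[OF q] by (simp add: abs_if)
qed

lemma D_same: "x \<ge> 1 \<Longrightarrow> D x x = 0"
  unfolding D_def using ce_double[of x] by (simp add: mult_2[symmetric])

lemma parity_cases:
  fixes a :: nat
  obtains p where "a = 2*p" | p where "a = 2*p+1"
  by (metis dvd_mult_div_cancel odd_two_times_div_two_succ)

lemma D_nonneg: "a + b \<ge> 1 \<Longrightarrow> D a b \<ge> 0"
proof (induction "a+b" arbitrary: a b rule: less_induct)
  case less
  show ?case
  proof (cases "b = 0")
    case True thus ?thesis using less.prems D_zero[of a] by simp
  next
    case b: False
    show ?thesis
    proof (cases "a = 0")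
      case True thus ?thesis using less.prems D_zero[of b] D_sym[of a b] by simp
    next
      case a: False
      obtain p where pa: "a = 2*p \<or> a = 2*p+1" by (metis parity_cases)
      obtain q where qb: "b = 2*q \<or> b = 2*q+1" by (metis parity_cases)
      show ?thesis
      proof -
        { assume "a = 2*p" "b = 2*q"
          hence "p \<ge> 1" "q \<ge> 1" using a b by auto
          hence ?thesis using less.hyps[of p q] \<open>a = 2*p\<close> \<open>b = 2*q\<close> D_ee by auto }
        moreover
        { assume "a = 2*p+1" "b = 2*q+1"
          hence ?thesis using less.hyps[of "p+1" q] less.hyps[of p "q+1"] D_oo[of p q] by auto }
        moreover
        { assume "a = 2*p+1" "b = 2*q"
          hence "q \<ge> 1" using b by auto
          hence ?thesis using less.hyps[of "p+1" q] less.hyps[of p q] D_oe[of q p] \<open>a = 2*p+1\<close> \<open>b = 2*q\<close> by auto }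
        moreover
        { assume "a = 2*p" "b = 2*q+1"
          hence "p \<ge> 1" using a by auto
          hence ?thesis using less.hyps[of "q+1" p] less.hyps[of q p] D_oe[of p q] \<open>a = 2*p\<close> \<open>b = 2*q+1\<close> D_sym[of a b] by auto }
        ultimately show ?thesis using pa qb by blast
      qed
    qed
  qed
qed

fun bal :: "nat \<Rightarrow> btree" where
  "bal n = (if n \<le> 1 then Leaf else Node (bal ((n+1) div 2)) (bal (n div 2)))"

declare bal.simps[simp del]

lemma bal_props: "n \<ge> 1 \<Longrightarrow> leaves (bal n) = n \<and> colless (bal n) = cb n"
proof (induction n rule: less_induct)
  case (less n)
  show ?case
  proof (cases "n = 1")
    case True thus ?thesis by (simp add: bal.simps cb.simps)
  next
    case False
    hence n2: "n \<ge> 2" using less.prems by simp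
    have h1: "leaves (bal ((n+1) div 2)) = (n+1) div 2 \<and> colless (bal ((n+1) div 2)) = cb ((n+1) div 2)"
      using less.IH[of "(n+1) div 2"] n2 by auto
    have h2: "leaves (bal (n div 2)) = n div 2 \<and> colless (bal (n div 2)) = cb (n div 2)"
      using less.IH[of "n div 2"] n2 by auto
    have "(n+1) div 2 = n div 2 + n mod 2" by presburger
    hence "nat \<bar>int ((n+1) div 2) - int (n div 2)\<bar> = n mod 2" by simp
    moreover have "bal n = Node (bal ((n+1) div 2)) (bal (n div 2))" using n2 by (subst bal.simps) simp
    moreover have "cb n = cb ((n+1) div 2) + cb (n div 2) + n mod 2" using n2 by (subst cb.simps) simp
    moreover have "(n+1) div 2 + n div 2 = n" by presburger
    ultimately show ?thesis using h1 h2 by simp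
  qed
qed

lemma leaves_pos: "leaves t \<ge> 1"
  by (induction t) auto

lemma cb_le_colless: "cb (leaves t) \<le> colless t"
proof (induction t)
  case Leaf thus ?case by (simp add: cb.simps)
next
  case (Node l r)
  have "D (leaves l) (leaves r) \<ge> 0" using leaves_pos[of l] by (intro D_nonneg) simp
  hence "int (cb (leaves l + leaves r)) \<le> int (cb (leaves l)) + int (cb (leaves r)) + \<bar>int (leaves l) - int (leaves r)\<bar>"
    unfolding D_def ce_def using leaves_pos[of l] leaves_pos[of r] by simp
  thus ?case using Node by simp
qed

lemma min_colless_eq: "n \<ge> 1 \<Longrightarrow> min_colless n = cb n"
  unfolding min_colless_def
proof (rule Least_equality)
  assume "n \<ge> 1"
  thus "\<exists>t. leaves t = n \<and> colless t = cb n" using bal_props by blast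
next
  fix y assume "\<exists>t. leaves t = n \<and> colless t = y"
  thus "cb n \<le> y" using cb_le_colless by blast
qed

lemma QB_char: "QB n = {(a,b). b \<le> a \<and> 1 \<le> b \<and> a + b = n \<and> D a b = 0}"
proof -
  have "\<And>a b. b \<le> a \<Longrightarrow> 1 \<le> b \<Longrightarrow> (min_colless a + min_colless b + (a - b) = min_colless (a+b)) = (D a b = 0)"
  proof -
    fix a b :: nat assume "b \<le> a" "1 \<le> b"
    have i: "int (cb a + cb b + (a - b)) = int (cb a) + int (cb b) + (int a - int b)"
      using \<open>b \<le> a\<close> by simp
    have "(cb a + cb b + (a - b) = cb (a+b)) = (int (cb a + cb b + (a - b)) = int (cb (a+b)))"
      by (rule of_nat_eq_iff[symmetric])
    also have "\<dots> = (D a b = 0)" unfolding i D_def ce_def using \<open>b \<le> a\<close> \<open>1 \<le> b\<close> by auto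
    finally show "(min_colless a + min_colless b + (a - b) = min_colless (a+b)) = (D a b = 0)"
      using \<open>b \<le> a\<close> \<open>1 \<le> b\<close> by (simp add: min_colless_eq)
  qed
  thus ?thesis unfolding QB_def by auto
qed

definition CA :: "nat \<Rightarrow> nat \<Rightarrow> bool" where
  "CA a b \<longleftrightarrow> (\<exists>t. 2^t dvd b \<and> a - b \<le> 2^t)"
definition CB :: "nat \<Rightarrow> nat \<Rightarrow> bool" where
  "CB a b \<longleftrightarrow> (\<exists>t. 2^t dvd a \<and> a - b \<le> 2^t \<and> 2^(t+1) \<le> a)"
definition CH :: "nat \<Rightarrow> nat \<Rightarrow> bool" where
  "CH a b \<longleftrightarrow> CA a b \<or> CB a b"

lemma odd_pow_dvd: "2^t dvd (2*x+1::nat) \<Longrightarrow> t = 0"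
proof (rule ccontr)
  assume "2^t dvd (2*x+1::nat)" "t \<noteq> 0"
  hence "(2::nat) dvd 2^t" by simp
  hence "(2::nat) dvd 2*x+1" using \<open>2^t dvd _\<close> dvd_trans by blast
  thus False by simp
qed

lemma pow_dvd_even: "t \<ge> 1 \<Longrightarrow> 2^t dvd (x::nat) \<Longrightarrow> even x"
  by (metis dvd_power dvd_trans le_zero_eq not_one_le_zero One_nat_def nat_le_linear
      power_one_right dvd_refl le_imp_power_dvd)

lemma CA_same: "CA p p"
  unfolding CA_def by (rule exI[of _ 0]) simp

lemma CH_same: "CH p p"
  unfolding CH_def using CA_same by simp

lemma CH_ee: "CH (2*p) (2*q) \<longleftrightarrow> CH p q"
proof
  assume "CH (2*p) (2*q)"
  then consider (A) t where "2^t dvd 2*q" "2*p - 2*q \<le> 2^t"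
    | (B) t where "2^t dvd 2*p" "2*p - 2*q \<le> 2^t" "2^(t+1) \<le> 2*p"
    unfolding CH_def CA_def CB_def by blast
  thus "CH p q"
  proof cases
    case A
    show ?thesis
    proof (cases t)
      case 0
      hence "p - q = 0" using A by simp
      thus ?thesis unfolding CH_def CA_def by (intro disjI1 exI[of _ 0]) simp
    next
      case (Suc t')
      hence "2^t' dvd q" "p - q \<le> 2^t'" using A by auto
      thus ?thesis unfolding CH_def CA_def by blast
    qed
  next
    case B
    show ?thesis
    proof (cases t)
      case 0
      hence "p - q = 0" using B by simp
      thus ?thesis unfolding CH_def CA_def by (intro disjI1 exI[of _ 0]) simp
    next
      case (Suc t')
      hence "2^t' dvd p" "p - q \<le> 2^t'" "2^(t'+1) \<le> p" using B by auto
      thus ?thesis unfolding CH_def CB_def by blast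
    qed
  qed
next
  assume "CH p q"
  then consider (A) t where "2^t dvd q" "p - q \<le> 2^t"
    | (B) t where "2^t dvd p" "p - q \<le> 2^t" "2^(t+1) \<le> p"
    unfolding CH_def CA_def CB_def by blast
  thus "CH (2*p) (2*q)"
  proof cases
    case A
    hence "2^(Suc t) dvd 2*q" "2*p - 2*q \<le> 2^(Suc t)" by auto
    thus ?thesis unfolding CH_def CA_def by blast
  next
    case B
    hence "2^(Suc t) dvd 2*p" "2*p - 2*q \<le> 2^(Suc t)" "2^(Suc t+1) \<le> 2*p" by auto
    thus ?thesis unfolding CH_def CB_def by blast
  qed
qed

lemma CH_oo: "CH (2*p+1) (2*q+1) \<longleftrightarrow> p \<le> q"
proof
  assume "CH (2*p+1) (2*q+1)"
  then consider (A) t where "2^t dvd 2*q+1" "2*p+1 - (2*q+1) \<le> 2^t"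
    | (B) t where "2^t dvd 2*p+1" "2*p+1 - (2*q+1) \<le> 2^t"
    unfolding CH_def CA_def CB_def by blast
  thus "p \<le> q"
  proof cases
    case A thus ?thesis using odd_pow_dvd[of t q] by simp
  next
    case B thus ?thesis using odd_pow_dvd[of t p] by simp
  qed
next
  assume "p \<le> q"
  thus "CH (2*p+1) (2*q+1)" unfolding CH_def CA_def by (intro disjI1 exI[of _ 0]) simp
qed

lemma CH_oe:
  assumes q1: "1 \<le> q" and qp: "q \<le> p"
  shows "CH (2*p+1) (2*q) \<longleftrightarrow> CH (p+1) q \<and> CH p q"
proof (cases "p = q")
  case True
  have "CH (2*p+1) (2*q)" unfolding CH_def CA_def using True by (intro disjI1 exI[of _ 0]) simp
  moreover have "CH (p+1) q" unfolding CH_def CA_def using True by (intro disjI1 exI[of _ 0]) simp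
  ultimately show ?thesis using True CH_same by simp
next
  case False
  hence lt: "q < p" using qp by simp
  show ?thesis
  proof
    assume "CH (2*p+1) (2*q)"
    then consider (A) t where "2^t dvd 2*q" "2*p+1 - 2*q \<le> 2^t"
      | (B) t where "2^t dvd 2*p+1" "2*p+1 - 2*q \<le> 2^t"
      unfolding CH_def CA_def CB_def by blast
    thus "CH (p+1) q \<and> CH p q"
    proof cases
      case A
      show ?thesis
      proof (cases t)
        case 0 thus ?thesis using A lt by simp
      next
        case (Suc t')
        hence "2^t' dvd q" "p + 1 - q \<le> 2^t'" "p - q \<le> 2^t'" using A lt by auto
        thus ?thesis unfolding CH_def CA_def by blast
      qed
    next
      case B
      hence "t = 0" using odd_pow_dvd by blast
      thus ?thesis using B lt by simp
    qed
  next
    assume R: "CH (p+1) q \<and> CH p q"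
    have G: "\<exists>u. 2^u dvd q \<and> p + 1 - q \<le> 2^u"
    proof (cases "CA (p+1) q")
      case True thus ?thesis unfolding CA_def by simp
    next
      case False
      with R obtain t where t: "2^t dvd p+1" "p+1-q \<le> 2^t" "2^(t+1) \<le> p+1"
        unfolding CH_def CB_def by blast
      have "t \<noteq> 0" using t lt by (intro notI) simp
      hence ev: "even (p+1)" using t pow_dvd_even[of t "p+1"] by simp
      have qe: "even q \<and> p = q + 1"
      proof -
        from R consider (A) u where "2^u dvd q" "p - q \<le> 2^u"
          | (B) u where "2^u dvd p" "p - q \<le> 2^u" "2^(u+1) \<le> p"
          unfolding CH_def CA_def CB_def by blast
        thus ?thesis
        proof cases
          case A
          show ?thesis
          proof (cases "p - q < 2^u")
            case True
            hence "CA (p+1) q" unfolding CA_def using A by (intro exI[of _ u]) simp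
            thus ?thesis using False by simp
          next
            case False
            hence eq: "p = q + 2^u" using A lt by simp
            show ?thesis
            proof (cases u)
              case 0 thus ?thesis using eq ev by simp
            next
              case (Suc u')
              hence "even q" using A pow_dvd_even[of u q] by simp
              moreover have "even ((2::nat)^u)" using Suc by simp
              ultimately have "even p" using eq by simp
              thus ?thesis using ev by simp
            qed
          qed
        next
          case B
          have "u = 0"
          proof (rule ccontr)
            assume "u \<noteq> 0"
            hence "even p" using B pow_dvd_even[of u p] by simp
            thus False using ev by simp
          qed
          hence "p = q + 1" using B lt by simp
          thus ?thesis using ev by simp
        qed
      qed
      hence "2^1 dvd q" "p + 1 - q \<le> 2^1" by auto
      thus ?thesis by blast
    qed
    then obtain u where u: "2^u dvd q" "p + 1 - q \<le> 2^u" by blast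
    hence "2^(Suc u) dvd 2*q" "2*p+1 - 2*q \<le> 2^(Suc u)" using lt by auto
    thus "CH (2*p+1) (2*q)" unfolding CH_def CA_def by blast
  qed
qed

lemma CH_eo:
  assumes qp: "q + 1 \<le> p"
  shows "CH (2*p) (2*q+1) \<longleftrightarrow> CH p (q+1) \<and> (if q = 0 then p = 1 else CH p q)"
proof (cases "p = q + 1")
  case True
  have "CH (2*p) (2*q+1)" unfolding CH_def CA_def using True by (intro disjI1 exI[of _ 0]) simp
  moreover have "q \<noteq> 0 \<Longrightarrow> CH p q" unfolding CH_def CA_def using True by (intro disjI1 exI[of _ 0]) simp
  ultimately show ?thesis using True CH_same by simp
next
  case False
  hence lt: "q + 2 \<le> p" using qp by simp
  show ?thesis
  proof
    assume "CH (2*p) (2*q+1)"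
    then consider (A) t where "2^t dvd 2*q+1" "2*p - (2*q+1) \<le> 2^t"
      | (B) t where "2^t dvd 2*p" "2*p - (2*q+1) \<le> 2^t" "2^(t+1) \<le> 2*p"
      unfolding CH_def CA_def CB_def by blast
    thus "CH p (q+1) \<and> (if q = 0 then p = 1 else CH p q)"
    proof cases
      case A
      hence "t = 0" using odd_pow_dvd by blast
      thus ?thesis using A lt by simp
    next
      case B
      show ?thesis
      proof (cases t)
        case 0 thus ?thesis using B lt by simp
      next
        case (Suc t')
        hence h: "2^t' dvd p" "p - q \<le> 2^t'" "2^(t'+1) \<le> p" using B lt by auto
        hence "CB p (q+1)" "CB p q" unfolding CB_def by (auto intro!: exI[of _ t'])
        moreover have "q \<noteq> 0"
        proof
          assume "q = 0"
          hence "p \<le> 2^t'" using h by simp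
          moreover have "2*2^t' \<le> p" using h by simp
          moreover have "(2::nat)^t' > 0" by simp
          ultimately show False by linarith
        qed
        ultimately show ?thesis unfolding CH_def by simp
      qed
    qed
  next
    assume R: "CH p (q+1) \<and> (if q = 0 then p = 1 else CH p q)"
    have q0: "q \<noteq> 0" using R lt by (intro notI) simp
    hence R2: "CH p q" using R by simp
    have G: "CB p q"
    proof (cases "CB p q")
      case True thus ?thesis .
    next
      case False
      with R2 obtain t where t: "2^t dvd q" "p - q \<le> 2^t" unfolding CH_def CA_def by blast
      have "t \<noteq> 0" using t lt by (intro notI) simp
      hence qe: "even q" using t pow_dvd_even[of t q] by simp
      have pq: "p = q + 2"
      proof -
        from R consider (A) u where "2^u dvd q+1" "p - (q+1) \<le> 2^u"
          | (B) u where "2^u dvd p" "p - (q+1) \<le> 2^u" "2^(u+1) \<le> p"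
          unfolding CH_def CA_def CB_def by blast
        thus ?thesis
        proof cases
          case A
          have "2^u dvd 2*(q div 2)+1" using A qe by simp
          hence "u = 0" using odd_pow_dvd by blast
          thus ?thesis using A lt by simp
        next
          case B
          show ?thesis
          proof (cases "p - q \<le> 2^u")
            case True
            hence "CB p q" unfolding CB_def using B by blast
            thus ?thesis using False by simp
          next
            case False
            hence eq: "p = q + 2^u + 1" using B by simp
            show ?thesis
            proof (cases u)
              case 0 thus ?thesis using eq by simp
            next
              case (Suc u')
              hence "even p" using B pow_dvd_even[of u p] by simp
              moreover have "even ((2::nat)^u)" using Suc by simp
              ultimately have "odd q" using eq by simp
              thus ?thesis using qe by simp
            qed
          qed
        qed
      qed
      have "q \<ge> 2" using qe q0 by presburger
      hence "2^1 dvd p" "p - q \<le> 2^1" "2^(1+1) \<le> p" using pq qe by auto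
      thus ?thesis unfolding CB_def by blast
    qed
    then obtain s where s: "2^s dvd p" "p - q \<le> 2^s" "2^(s+1) \<le> p" unfolding CB_def by blast
    hence "2^(Suc s) dvd 2*p" "2*p - (2*q+1) \<le> 2^(Suc s)" "2^(Suc s+1) \<le> 2*p" by auto
    thus "CH (2*p) (2*q+1)" unfolding CH_def CB_def by blast
  qed
qed

lemma D0_iff: "b \<le> a \<Longrightarrow> 1 \<le> b \<Longrightarrow> D a b = 0 \<longleftrightarrow> CH a b"
proof (induction "a+b" arbitrary: a b rule: less_induct)
  case less
  obtain p where pa: "a = 2*p \<or> a = 2*p+1" by (metis parity_cases)
  obtain q where qb: "b = 2*q \<or> b = 2*q+1" by (metis parity_cases)
  { assume a: "a = 2*p" and b: "b = 2*q"
    hence "p \<ge> 1" "q \<ge> 1" "q \<le> p" using less.prems by auto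
    hence ?case using less.hyps[of p q] a b D_ee CH_ee by auto }
  moreover
  { assume a: "a = 2*p+1" and b: "b = 2*q+1"
    have n1: "D (p+1) q \<ge> 0" "D p (q+1) \<ge> 0" by (auto intro: D_nonneg)
    have ?case
    proof (cases "p = q")
      case True thus ?thesis using a b D_same[of a] CH_same by simp
    next
      case False
      hence "D a b \<noteq> 0" using a b D_oo[of p q] n1 by simp
      moreover have "\<not> CH a b" using a b CH_oo[of p q] False less.prems by simp
      ultimately show ?thesis by simp
    qed }
  moreover
  { assume a: "a = 2*p+1" and b: "b = 2*q"
    hence q: "q \<ge> 1" "q \<le> p" using less.prems by auto
    have n1: "D (p+1) q \<ge> 0" "D p q \<ge> 0" using q by (auto intro: D_nonneg)
    have "D a b = 0 \<longleftrightarrow> D (p+1) q = 0 \<and> D p q = 0" using a b D_oe[OF q(1)] n1 by auto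
    also have "\<dots> \<longleftrightarrow> CH (p+1) q \<and> CH p q"
      using less.hyps[of "p+1" q] less.hyps[of p q] a b q by auto
    also have "\<dots> \<longleftrightarrow> CH a b" using CH_oe[OF q] a b by simp
    finally have ?case . }
  moreover
  { assume a: "a = 2*p" and b: "b = 2*q+1"
    hence q: "q + 1 \<le> p" using less.prems by auto
    have n1: "D (q+1) p \<ge> 0" "D q p \<ge> 0" using q by (auto intro: D_nonneg)
    have "D a b = D (2*q+1) (2*p)" using a b D_sym by simp
    also have "\<dots> = D (q+1) p + D q p" using q by (intro D_oe) simp
    finally have "D a b = 0 \<longleftrightarrow> D p (q+1) = 0 \<and> D p q = 0" using n1 D_sym[of p] by auto
    also have "\<dots> \<longleftrightarrow> CH p (q+1) \<and> (if q = 0 then p = 1 else CH p q)"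
    proof (cases "q = 0")
      case True
      thus ?thesis using less.hyps[of p "q+1"] a b q D_zero[of p] by auto
    next
      case False
      thus ?thesis using less.hyps[of p "q+1"] less.hyps[of p q] a b q by auto
    qed
    also have "\<dots> \<longleftrightarrow> CH a b" using CH_eo[OF q] a b by simp
    finally have ?case . }
  ultimately show ?case using pa qb by blast
qed

lemma QB_double:
  assumes m: "m \<ge> 1"
  shows "QB (2*m) = {(m,m)} \<union> (\<lambda>(a,b). (2*a, 2*b)) ` QB m"
proof (intro set_eqI iffI)
  fix x assume "x \<in> QB (2*m)"
  then obtain a b where x: "x = (a,b)" and h: "b \<le> a" "1 \<le> b" "a + b = 2*m" "D a b = 0"
    unfolding QB_char by blast
  obtain p where pa: "a = 2*p \<or> a = 2*p+1" by (metis parity_cases)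
  obtain q where qb: "b = 2*q \<or> b = 2*q+1" by (metis parity_cases)
  { assume a: "a = 2*p+1" and b: "b = 2*q+1"
    have n1: "D (p+1) q \<ge> 0" "D p (q+1) \<ge> 0" by (auto intro: D_nonneg)
    have "p = q"
    proof (rule ccontr)
      assume "p \<noteq> q" thus False using h a b D_oo[of p q] n1 by simp
    qed
    hence "x \<in> {(m,m)}" using x a b h by simp }
  moreover
  { assume a: "a = 2*p" and b: "b = 2*q"
    hence "p \<ge> 1" "q \<ge> 1" using h by auto
    hence "D p q = 0" using h a b D_ee by simp
    hence "(p,q) \<in> QB m" unfolding QB_char using h a b by auto
    hence "x \<in> (\<lambda>(a,b). (2*a, 2*b)) ` QB m" using x a b by force }
  moreover
  { assume "a = 2*p+1" "b = 2*q" hence False using h by presburger }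
  moreover
  { assume "a = 2*p" "b = 2*q+1" hence False using h by presburger }
  ultimately show "x \<in> {(m,m)} \<union> (\<lambda>(a,b). (2*a, 2*b)) ` QB m" using pa qb by blast
next
  fix x assume "x \<in> {(m,m)} \<union> (\<lambda>(a,b). (2*a, 2*b)) ` QB m"
  then consider "x = (m,m)" | a b where "x = (2*a,2*b)" "(a,b) \<in> QB m" by auto
  thus "x \<in> QB (2*m)"
  proof cases
    case 1 thus ?thesis unfolding QB_char using m D_same[of m] by auto
  next
    case 2
    hence "b \<le> a" "1 \<le> b" "a + b = m" "D a b = 0" unfolding QB_char by auto
    thus ?thesis unfolding QB_char using 2 D_ee[of a b] by auto
  qed
qed

lemma QB_pow:
  assumes n0: "n0 \<ge> 1"
  shows "QB (2^k * n0) = (if k \<ge> 1 then {(2^(k-1)*n0, 2^(k-1)*n0)} else {})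
           \<union> (\<lambda>(a,b). (2^k*a, 2^k*b)) ` QB n0"
proof (induction k)
  case 0
  have "(\<lambda>(a,b). (a::nat, b::nat)) ` QB n0 = QB n0" by (simp add: case_prod_beta)
  thus ?case by simp
next
  case (Suc k)
  have "QB (2^Suc k * n0) = QB (2 * (2^k*n0))" by (simp add: mult.assoc)
  also have "\<dots> = {(2^k*n0, 2^k*n0)} \<union> (\<lambda>(a,b). (2*a, 2*b)) ` QB (2^k*n0)"
    using n0 by (intro QB_double) simp
  also have "\<dots> = {(2^k*n0, 2^k*n0)} \<union> (\<lambda>(a,b). (2^Suc k*a, 2^Suc k*b)) ` QB n0"
  proof -
    have e: "(\<lambda>(a,b). (2*a,2*b)) ` ((\<lambda>(a,b). (2^k*a, 2^k*b)) ` QB n0) = (\<lambda>(a,b). (2^Suc k*a, 2^Suc k*b)) ` QB n0"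
      by (simp add: image_image case_prod_beta mult.assoc)
    have f: "(\<lambda>(a,b). (2*a,2*b)) ` (if k \<ge> 1 then {(2^(k-1)*n0, 2^(k-1)*n0)} else {}) \<subseteq> {(2^k*n0, 2^k*n0)}"
    proof (cases k)
      case (Suc j) thus ?thesis by (simp add: mult.assoc)
    qed simp
    show ?thesis unfolding Suc.IH image_Un e using f by blast
  qed
  finally show ?case by simp
qed

definition RR :: "(nat \<Rightarrow> nat) \<Rightarrow> nat \<Rightarrow> nat \<Rightarrow> nat" where
  "RR m l j = (\<Sum>i=j..l. 2 ^ m i)"
definition HH :: "(nat \<Rightarrow> nat) \<Rightarrow> nat \<Rightarrow> nat" where
  "HH m j = (\<Sum>i=1..<j. 2 ^ m i)"
definition SS :: "(nat \<Rightarrow> nat) \<Rightarrow> nat \<Rightarrow> nat" where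
  "SS m j = (\<Sum>i=1..<j. (2::nat) ^ (m i - 1))"

lemma decomp_unique:
  fixes M x1 r1 x2 r2 :: nat
  assumes "M dvd x1" "r1 < M" "M dvd x2" "r2 < M" "x1 + r1 = x2 + r2"
  shows "r1 = r2 \<and> x1 = x2"
proof -
  have "(x1 + r1) mod M = r1" using assms(1,2) by (auto simp: dvd_def)
  moreover have "(x2 + r2) mod M = r2" using assms(3,4) by (auto simp: dvd_def)
  ultimately show ?thesis using assms(5) by simp
qed

context
  fixes m :: "nat \<Rightarrow> nat" and l :: nat
  assumes mdec: "\<forall>i\<in>{1..<l}. m (Suc i) < m i"
    and ml: "m l = 0"
begin

lemma mono_m:
  assumes "1 \<le> i" "i \<le> i'" "i' \<le> l"
  shows "m i' + (i' - i) \<le> m i"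
  using assms(2,3)
proof (induction i' rule: dec_induct)
  case base thus ?case by simp
next
  case (step k)
  have "k \<in> {1..<l}" using step assms(1) by simp
  hence "m (Suc k) < m k" using mdec by blast
  thus ?case using step by simp
qed

lemma m_pos: "1 \<le> i \<Longrightarrow> i < l \<Longrightarrow> m i \<ge> 1"
  using mono_m[of i l] ml by simp

lemma split_n: "1 \<le> j \<Longrightarrow> j \<le> l + 1 \<Longrightarrow> HH m j + RR m l j = (\<Sum>i=1..l. 2 ^ m i)"
proof -
  assume "1 \<le> j" "j \<le> l + 1"
  have "HH m j + RR m l j = (\<Sum>i=1..<j. 2 ^ m i) + (\<Sum>i=j..<Suc l. 2 ^ m i)"
    unfolding HH_def RR_def by (simp add: atLeastLessThanSuc_atLeastAtMost)
  also have "\<dots> = (\<Sum>i=1..<Suc l. 2 ^ m i)"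
    using \<open>1 \<le> j\<close> \<open>j \<le> l + 1\<close> by (intro sum.atLeastLessThan_concat) auto
  finally show ?thesis by (simp add: atLeastLessThanSuc_atLeastAtMost)
qed

lemma two_S: "j \<le> l \<Longrightarrow> 2 * SS m j = HH m j"
proof -
  assume "j \<le> l"
  have "2 * SS m j = (\<Sum>i=1..<j. 2 * 2 ^ (m i - 1))" unfolding SS_def by (simp add: sum_distrib_left)
  also have "\<dots> = (\<Sum>i=1..<j. 2 ^ m i)"
  proof (rule sum.cong)
    fix i assume "i \<in> {1..<j}"
    hence "m i \<ge> 1" using m_pos \<open>j \<le> l\<close> by auto
    thus "2 * 2 ^ (m i - 1) = (2::nat) ^ m i" by (metis Suc_diff_le diff_Suc_1 power_Suc)
  qed simp
  finally show ?thesis unfolding HH_def .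
qed

lemma R_step: "1 \<le> j \<Longrightarrow> j \<le> l \<Longrightarrow> RR m l j = 2 ^ m j + RR m l (Suc j)"
  unfolding RR_def by (simp add: sum.atLeast_Suc_atMost)

lemma R_last: "RR m l (Suc l) = 0"
  unfolding RR_def by simp

lemma R_bound: "1 \<le> j \<Longrightarrow> j \<le> l \<Longrightarrow> RR m l j < 2 ^ (m j + 1)"
proof (induction "l - j" arbitrary: j)
  case 0
  hence "j = l" by simp
  thus ?case using R_step[of l] R_last ml 0 by simp
next
  case (Suc d)
  hence "j < l" by simp
  have IH: "RR m l (Suc j) < 2 ^ (m (Suc j) + 1)" using Suc by simp
  have "j \<in> {1..<l}" using Suc.prems \<open>j < l\<close> by simp
  hence "m (Suc j) + 1 \<le> m j" using mdec by fastforce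
  hence "(2::nat) ^ (m (Suc j) + 1) \<le> 2 ^ m j" by (intro power_increasing) auto
  moreover have "RR m l j = 2 ^ m j + RR m l (Suc j)" using R_step Suc.prems by simp
  ultimately show ?case using IH by simp
qed

lemma R_lower: "1 \<le> j \<Longrightarrow> j \<le> l \<Longrightarrow> RR m l j \<ge> 2 ^ m j"
  using R_step by simp

lemma R_lower2: "1 \<le> j \<Longrightarrow> j < l \<Longrightarrow> RR m l j \<ge> 2 ^ m j + 1"
proof -
  assume "1 \<le> j" "j < l"
  have "RR m l (Suc j) \<ge> 2 ^ m (Suc j)" using R_lower[of "Suc j"] \<open>j < l\<close> by simp
  moreover have "(2::nat) ^ m (Suc j) \<ge> 1" by simp
  ultimately have "RR m l (Suc j) \<ge> 1" by linarith
  thus ?thesis using R_step[of j] \<open>1 \<le> j\<close> \<open>j < l\<close> by simp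
qed

lemma H_dvd: "(\<forall>i\<in>{1..<j}. T \<le> m i) \<Longrightarrow> 2^T dvd HH m j"
  unfolding HH_def by (intro dvd_sum) (simp add: le_imp_power_dvd)

lemma S_dvd: "(\<forall>i\<in>{1..<j}. T + 1 \<le> m i) \<Longrightarrow> 2^T dvd SS m j"
  unfolding SS_def
proof (intro dvd_sum)
  fix i assume "\<forall>i\<in>{1..<j}. T + 1 \<le> m i" "i \<in> {1..<j}"
  hence "T \<le> m i - 1" by fastforce
  thus "(2::nat)^T dvd 2 ^ (m i - 1)" by (rule le_imp_power_dvd)
qed

lemma S_ge: "2 \<le> j \<Longrightarrow> SS m j \<ge> 2 ^ (m 1 - 1)"
  unfolding SS_def by (rule member_le_sum) auto

end

lemma ar1:
  fixes Y d R' X :: nat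
  assumes "2*Y - d = Y + R'" "d \<le> Y" "X \<le> R'" "Y = 2*X"
  shows "d \<le> X"
  using assms by arith

lemma QB_CH: "QB n = {(a,b). b \<le> a \<and> 1 \<le> b \<and> a + b = n \<and> CH a b}"
  unfolding QB_char using D0_iff by auto

context
  fixes m :: "nat \<Rightarrow> nat" and l :: nat
  assumes mdec: "\<forall>i\<in>{1..<l}. m (Suc i) < m i"
    and ml: "m l = 0"
    and l2: "2 \<le> l"
begin

abbreviation "N \<equiv> (\<Sum>i=1..l. (2::nat) ^ m i)"

lemma N_j: "1 \<le> j \<Longrightarrow> j \<le> l \<Longrightarrow> N = 2 * SS m j + RR m l j"
  using split_n[OF mdec ml, of j] two_S[OF mdec ml, of j] by simp

lemma R_l: "RR m l l = 1"
  using R_step[OF mdec ml, of l] R_last[OF mdec ml] ml l2 by simp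

lemma N_l: "N = 2 * SS m l + 1"
  using N_j[of l] R_l l2 by simp

lemma S_pos: "2 \<le> j \<Longrightarrow> SS m j \<ge> 1"
proof -
  assume "2 \<le> j"
  hence "SS m j \<ge> 2 ^ (m 1 - 1)" by (rule S_ge[OF mdec ml])
  moreover have "(2::nat) ^ (m 1 - 1) \<ge> 1" by simp
  ultimately show ?thesis by linarith
qed

lemma memB1: "(SS m l + 1, SS m l) \<in> QB N"
proof -
  have "CH (SS m l + 1) (SS m l)" unfolding CH_def CA_def by (intro disjI1 exI[of _ 0]) simp
  thus ?thesis unfolding QB_CH using N_l S_pos[OF l2] by simp
qed

lemma memB3:
  assumes j: "j \<in> {2..l-1}" and c: "m j + 1 < m (j - 1)"
  shows "(N - SS m j, SS m j) \<in> QB N"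
proof -
  have j2: "2 \<le> j" "j < l" using j l2 by auto
  have Nj: "N = 2 * SS m j + RR m l j" using N_j j2 by simp
  define t where "t = m (j - 1) - 1"
  have "\<forall>i\<in>{1..<j}. t + 1 \<le> m i"
  proof
    fix i assume "i \<in> {1..<j}"
    hence "m (j - 1) + ((j - 1) - i) \<le> m i" using j2 by (intro mono_m[OF mdec ml]) auto
    thus "t + 1 \<le> m i" using c unfolding t_def by simp
  qed
  hence dv: "2^t dvd SS m j" by (rule S_dvd[OF mdec ml])
  have "RR m l j < 2 ^ (m j + 1)" using j2 by (intro R_bound[OF mdec ml]) auto
  moreover have "(2::nat) ^ (m j + 1) \<le> 2 ^ t" using c unfolding t_def by (intro power_increasing) auto
  ultimately have "N - SS m j - SS m j \<le> 2^t" using Nj by simp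
  hence "CH (N - SS m j) (SS m j)" unfolding CH_def CA_def using dv by blast
  thus ?thesis unfolding QB_CH using Nj S_pos[OF j2(1)] by auto
qed

lemma memB2:
  assumes j: "j \<in> {2..l-1}" and c: "m (Suc j) + 1 < m j"
  shows "(SS m j + 2 ^ m j, N - (SS m j + 2 ^ m j)) \<in> QB N"
proof -
  have j2: "2 \<le> j" "j < l" using j l2 by auto
  have Nj: "N = 2 * SS m j + 2 ^ m j + RR m l (Suc j)"
    using N_j[of j] R_step[OF mdec ml, of j] j2 by simp
  have "RR m l (Suc j) < 2 ^ (m (Suc j) + 1)" using j2 by (intro R_bound[OF mdec ml]) auto
  moreover have "(2::nat) ^ (m (Suc j) + 1) \<le> 2 ^ m j" using c by (intro power_increasing) auto
  ultimately have Rlt: "RR m l (Suc j) < 2 ^ m j" by simp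
  have "\<forall>i\<in>{1..<j}. m j + 1 \<le> m i"
  proof
    fix i assume "i \<in> {1..<j}"
    hence "m j + (j - i) \<le> m i" using j2 by (intro mono_m[OF mdec ml]) auto
    moreover have "i < j" using \<open>i \<in> {1..<j}\<close> by simp
    ultimately show "m j + 1 \<le> m i" by arith
  qed
  hence "2 ^ m j dvd SS m j" by (rule S_dvd[OF mdec ml])
  hence dv: "2 ^ m j dvd SS m j + 2 ^ m j" by simp
  have "m j + (j - 1) \<le> m 1" using j2 by (intro mono_m[OF mdec ml]) auto
  hence "m j \<le> m 1 - 1" using j2 by simp
  hence p1: "(2::nat) ^ m j \<le> 2 ^ (m 1 - 1)" by (intro power_increasing) auto
  have "2 ^ m j \<le> SS m j" using S_ge[OF mdec ml j2(1)] p1 by linarith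
  hence big: "2 ^ (m j + 1) \<le> SS m j + 2 ^ m j" by simp
  have "CH (SS m j + 2 ^ m j) (N - (SS m j + 2 ^ m j))"
    unfolding CH_def CB_def using dv big Nj by (intro disjI2 exI[of _ "m j"]) auto
  moreover have "1 \<le> N - (SS m j + 2 ^ m j)" using Nj S_pos[OF j2(1)] by simp
  ultimately show ?thesis unfolding QB_CH using Nj Rlt by auto
qed

lemma least_j:
  assumes T: "T \<ge> 1"
  obtains j where "1 \<le> j" "j \<le> l" "m j < T" "\<And>i. 1 \<le> i \<Longrightarrow> i < j \<Longrightarrow> T \<le> m i"
proof -
  let ?P = "\<lambda>j. 1 \<le> j \<and> j \<le> l \<and> m j < T"
  have "?P l" using l2 ml T by simp
  hence P: "?P (LEAST j. ?P j)" by (rule LeastI)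
  have "\<And>i. 1 \<le> i \<Longrightarrow> i < (LEAST j. ?P j) \<Longrightarrow> T \<le> m i"
  proof -
    fix i assume "1 \<le> i" "i < (LEAST j. ?P j)"
    hence "\<not> ?P i" using not_less_Least[of i ?P] by blast
    thus "T \<le> m i" using \<open>1 \<le> i\<close> \<open>i < (LEAST j. ?P j)\<close> P by auto
  qed
  thus ?thesis using P that by blast
qed

lemma QB_sub:
  assumes ab: "(a,b) \<in> QB N"
  shows "(a,b) = (SS m l + 1, SS m l)
    \<or> (\<exists>j. j \<in> {2..l-1} \<and> m (Suc j) + 1 < m j \<and> (a,b) = (SS m j + 2^m j, N - (SS m j + 2^m j)))
    \<or> (\<exists>j. j \<in> {2..l-1} \<and> m j + 1 < m (j-1) \<and> (a,b) = (N - SS m j, SS m j))"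
proof -
  have h: "b \<le> a" "1 \<le> b" "a + b = N" "CH a b" using ab unfolding QB_CH by auto
  show ?thesis
  proof (cases "a = b + 1")
    case True
    hence "b = SS m l" using h N_l by simp
    thus ?thesis using True by simp
  next
    case False
    have "a \<noteq> b" using h N_l by presburger
    hence d2: "a - b \<ge> 2" using h False by simp
    from h(4) consider (A) "CA a b" | (B) "CB a b" unfolding CH_def by blast
    thus ?thesis
    proof cases
      case A
      then obtain t where t: "2^t dvd b" "a - b \<le> 2^t" unfolding CA_def by blast
      obtain j where j: "1 \<le> j" "j \<le> l" "m j < Suc t" "\<And>i. 1 \<le> i \<Longrightarrow> i < j \<Longrightarrow> Suc t \<le> m i"
        using least_j[of "Suc t"] by auto
      have hd: "2 ^ Suc t dvd HH m j" using j(4) by (intro H_dvd[OF mdec ml]) auto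
      have r1: "RR m l j < 2 ^ (m j + 1)" using j by (intro R_bound[OF mdec ml]) auto
      have r2: "(2::nat) ^ (m j + 1) \<le> 2 ^ Suc t" using j(3) by (intro power_increasing) auto
      have hr: "RR m l j < 2 ^ Suc t" using r1 r2 by linarith
      have "(2::nat) ^ t < 2 ^ Suc t" by simp
      hence dl: "a - b < 2 ^ Suc t" using t by linarith
      have bd: "2 ^ Suc t dvd 2 * b" using t by simp
      have "HH m j + RR m l j = 2 * b + (a - b)"
        using split_n[OF mdec ml, of j] j h by simp
      hence eqs: "RR m l j = a - b" "HH m j = 2 * b" using decomp_unique[OF hd hr bd dl] by auto
      hence bS: "b = SS m j" using two_S[OF mdec ml j(2)] by simp
      have "j \<noteq> 1" using eqs h unfolding HH_def by (intro notI) simp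
      hence jge: "2 \<le> j" using j by simp
      have "j \<noteq> l" using eqs R_l d2 by (intro notI) simp
      hence jl: "j < l" using j by simp
      have "RR m l j \<ge> 2 ^ m j + 1" using j jl by (intro R_lower2[OF mdec ml]) auto
      hence lt: "(2::nat) ^ m j < 2 ^ t" using eqs t by linarith
      have "m j < t"
      proof (rule ccontr)
        assume "\<not> m j < t"
        hence "(2::nat) ^ t \<le> 2 ^ m j" by (intro power_increasing) auto
        thus False using lt by linarith
      qed
      moreover have "Suc t \<le> m (j - 1)" using j(4)[of "j-1"] jge by simp
      ultimately have c: "m j + 1 < m (j - 1)" by simp
      have "a = N - SS m j" using h bS by simp
      hence "(a,b) = (N - SS m j, SS m j)" using bS by simp
      moreover have "j \<in> {2..l-1}" using jge jl by simp
      ultimately show ?thesis using c by blast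
    next
      case B
      let ?Q = "\<lambda>t. 2^t dvd a \<and> a - b \<le> 2^t \<and> 2^(t+1) \<le> a"
      have ex: "\<exists>t. ?Q t" using B unfolding CB_def by blast
      define t where "t = (LEAST t. ?Q t)"
      have Qt: "?Q t" unfolding t_def using ex by (rule LeastI_ex)
      have minQ: "\<And>t'. t' < t \<Longrightarrow> \<not> ?Q t'" unfolding t_def by (rule not_less_Least)
      have t1: "t \<ge> 1"
      proof (rule ccontr)
        assume "\<not> t \<ge> 1" hence "t = 0" by simp
        thus False using Qt d2 by simp
      qed
      obtain j where j: "1 \<le> j" "j \<le> l" "m j < Suc t" "\<And>i. 1 \<le> i \<Longrightarrow> i < j \<Longrightarrow> Suc t \<le> m i"
        using least_j[of "Suc t"] by auto
      have hd: "2 ^ Suc t dvd HH m j" using j(4) by (intro H_dvd[OF mdec ml]) auto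
      have r1: "RR m l j < 2 ^ (m j + 1)" using j by (intro R_bound[OF mdec ml]) auto
      have r2: "(2::nat) ^ (m j + 1) \<le> 2 ^ Suc t" using j(3) by (intro power_increasing) auto
      have hr: "RR m l j < 2 ^ Suc t" using r1 r2 by linarith
      have pw: "(2::nat) ^ Suc t = 2 * 2 ^ t" by simp
      have a2: "2 ^ Suc t \<le> 2 * a" using Qt by simp
      have ad: "2 ^ Suc t dvd 2 * a" using Qt by simp
      hence ad2: "2 ^ Suc t dvd 2 * a - 2 ^ Suc t" by (intro dvd_diff_nat) auto
      have dl: "2 ^ Suc t - (a - b) < 2 ^ Suc t" using d2 by (intro diff_less) auto
      have s1: "HH m j + RR m l j = a + b" using split_n[OF mdec ml, of j] j h by simp
      have e1: "(2 * a - 2 ^ Suc t) + (2 ^ Suc t - (a - b)) = a + b" using a2 Qt h(1) pw by arith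
      have "HH m j + RR m l j = (2 * a - 2 ^ Suc t) + (2 ^ Suc t - (a - b))"
        by (simp only: s1 e1)
      hence eqs: "RR m l j = 2 ^ Suc t - (a - b)" "HH m j = 2 * a - 2 ^ Suc t"
        using decomp_unique[OF hd hr ad2 dl] by auto
      have "RR m l j \<ge> 2 ^ t" using eqs Qt pw by arith
      hence lt: "(2::nat) ^ t < 2 ^ (m j + 1)" using r1 by linarith
      have "t < m j + 1"
      proof (rule ccontr)
        assume "\<not> t < m j + 1"
        hence "(2::nat) ^ (m j + 1) \<le> 2 ^ t" by (intro power_increasing) auto
        thus False using lt by linarith
      qed
      hence mj: "m j = t" using j(3) by simp
      have "j \<noteq> l" using mj ml t1 by (intro notI) simp
      hence jl: "j < l" using j by simp
      have "j \<noteq> 1"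
      proof
        assume "j = 1"
        hence "2 * a = 2 ^ Suc t" using eqs a2 unfolding HH_def by simp
        thus False using Qt by simp
      qed
      hence jge: "2 \<le> j" using j by simp
      have aS: "a = SS m j + 2 ^ m j"
        using eqs two_S[OF mdec ml j(2)] mj a2 pw by simp
      have c: "m (Suc j) + 1 < m j"
      proof (rule ccontr)
        assume nc: "\<not> m (Suc j) + 1 < m j"
        have "j \<in> {1..<l}" using j jl by simp
        hence "m (Suc j) < m j" using mdec by blast
        hence ms: "m (Suc j) = t - 1" using nc mj by simp
        have Rs: "RR m l j = 2 ^ t + RR m l (Suc j)" using R_step[OF mdec ml, of j] j mj by simp
        have r3: "RR m l (Suc j) \<ge> 2 ^ (t - 1)" using R_lower[OF mdec ml, of "Suc j"] jl ms by simp
        have pt: "(2::nat) ^ t = 2 * 2 ^ (t - 1)" using t1 by (metis Suc_diff_1 One_nat_def less_eq_Suc_le power_Suc)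
        have qd: "a - b \<le> 2 ^ t" using Qt by blast
        have e3: "2 * 2 ^ t - (a - b) = 2 ^ t + RR m l (Suc j)" using Rs eqs(1) pw by simp
        have "a - b \<le> 2 ^ (t - 1)" using ar1[OF e3 qd r3 pt] .
        moreover have "2 ^ (t - 1) dvd a"
        proof -
          have "(2::nat)^(t-1) dvd 2^t" by (rule le_imp_power_dvd) simp
          moreover have "2^t dvd a" using Qt by blast
          ultimately show ?thesis by (rule dvd_trans)
        qed
        moreover have "2 ^ (t - 1 + 1) \<le> a" using Qt t1 pt by simp
        ultimately have "?Q (t - 1)" by blast
        thus False using minQ[of "t - 1"] t1 by simp
      qed
      have "(a,b) = (SS m j + 2^m j, N - (SS m j + 2^m j))" using aS h by simp
      moreover have "j \<in> {2..l-1}" using jge jl by simp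
      ultimately show ?thesis using c by blast
    qed
  qed
qed

end

definition Qf :: "(nat \<Rightarrow> nat) \<Rightarrow> nat \<Rightarrow> qb_label \<Rightarrow> nat \<times> nat" where
  "Qf m l lab = (case lab of B1 \<Rightarrow> (SS m l + 1, SS m l)
     | B2 j \<Rightarrow> (SS m j + 2^m j, (\<Sum>i=1..l. 2^m i) - (SS m j + 2^m j))
     | B3 j \<Rightarrow> ((\<Sum>i=1..l. 2^m i) - SS m j, SS m j)
     | B4 \<Rightarrow> (0,0))"

definition L0 :: "(nat \<Rightarrow> nat) \<Rightarrow> nat \<Rightarrow> qb_label set" where
  "L0 m l = {B1} \<union> {B2 j |j. j \<in> {2..l-1} \<and> m (Suc j) + 1 < m j}
              \<union> {B3 j |j. j \<in> {2..l-1} \<and> m j + 1 < m (j-1)}"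

lemma pow_interval_unique:
  fixes x e f :: nat
  assumes "2^e < x" "x < 2^(e+1)" "2^f < x" "x < 2^(f+1)"
  shows "e = f"
proof (rule ccontr)
  assume "e \<noteq> f"
  then consider "e + 1 \<le> f" | "f + 1 \<le> e" by linarith
  thus False
  proof cases
    case 1
    hence "(2::nat)^(e+1) \<le> 2^f" by (intro power_increasing) auto
    thus False using assms by linarith
  next
    case 2
    hence "(2::nat)^(f+1) \<le> 2^e" by (intro power_increasing) auto
    thus False using assms by linarith
  qed
qed

context
  fixes m :: "nat \<Rightarrow> nat" and l :: nat
  assumes mdec: "\<forall>i\<in>{1..<l}. m (Suc i) < m i"
    and ml: "m l = 0"
    and l2: "2 \<le> l"
begin

lemma QB_odd_eq: "QB (\<Sum>i=1..l. 2^m i) = Qf m l ` L0 m l"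
proof
  show "QB (\<Sum>i=1..l. 2^m i) \<subseteq> Qf m l ` L0 m l"
  proof
    fix x assume "x \<in> QB (\<Sum>i=1..l. 2^m i)"
    moreover obtain a b where "x = (a,b)" by fastforce
    ultimately have "(a,b) \<in> QB (\<Sum>i=1..l. 2^m i)" by simp
    from QB_sub[OF mdec ml l2 this] show "x \<in> Qf m l ` L0 m l"
    proof (elim disjE exE conjE)
      assume "(a,b) = (SS m l + 1, SS m l)"
      hence "x = Qf m l B1" using \<open>x = (a,b)\<close> unfolding Qf_def by simp
      moreover have "B1 \<in> L0 m l" unfolding L0_def by simp
      ultimately show ?thesis by blast
    next
      fix j assume "j \<in> {2..l-1}" "m (Suc j) + 1 < m j"
        "(a, b) = (SS m j + 2 ^ m j, (\<Sum>i=1..l. 2^m i) - (SS m j + 2 ^ m j))"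
      hence "x = Qf m l (B2 j)" "B2 j \<in> L0 m l" using \<open>x = (a,b)\<close> unfolding Qf_def L0_def by auto
      thus ?thesis by blast
    next
      fix j assume "j \<in> {2..l-1}" "m j + 1 < m (j - 1)"
        "(a, b) = ((\<Sum>i=1..l. 2^m i) - SS m j, SS m j)"
      hence "x = Qf m l (B3 j)" "B3 j \<in> L0 m l" using \<open>x = (a,b)\<close> unfolding Qf_def L0_def by auto
      thus ?thesis by blast
    qed
  qed
next
  show "Qf m l ` L0 m l \<subseteq> QB (\<Sum>i=1..l. 2^m i)"
    unfolding L0_def Qf_def using memB1[OF mdec ml l2] memB2[OF mdec ml l2] memB3[OF mdec ml l2] by auto
qed

lemma d_B1: "fst (Qf m l B1) - snd (Qf m l B1) = 1"
  unfolding Qf_def by simp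

lemma d_B2:
  assumes j: "j \<in> {2..l-1}" and c: "m (Suc j) + 1 < m j"
  shows "2^(m j - 1) < fst (Qf m l (B2 j)) - snd (Qf m l (B2 j))"
        "fst (Qf m l (B2 j)) - snd (Qf m l (B2 j)) < 2^(m j - 1 + 1)"
        "m j \<ge> 2"
proof -
  have j2: "2 \<le> j" "j < l" using j l2 by auto
  have Nj: "(\<Sum>i=1..l. 2^m i) = 2 * SS m j + 2 ^ m j + RR m l (Suc j)"
    using N_j[OF mdec ml l2, of j] R_step[OF mdec ml, of j] j2 by simp
  have "RR m l (Suc j) < 2 ^ (m (Suc j) + 1)" using j2 by (intro R_bound[OF mdec ml]) auto
  moreover have "(2::nat) ^ (m (Suc j) + 1) \<le> 2 ^ (m j - 1)" using c by (intro power_increasing) auto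
  ultimately have Rlt: "RR m l (Suc j) < 2 ^ (m j - 1)" by linarith
  have Rpos: "RR m l (Suc j) \<ge> 1"
  proof -
    have "RR m l (Suc j) \<ge> 2 ^ m (Suc j)" using R_lower[OF mdec ml, of "Suc j"] j2 by simp
    moreover have "(2::nat) ^ m (Suc j) \<ge> 1" by simp
    ultimately show ?thesis by linarith
  qed
  show m2: "m j \<ge> 2" using c by simp
  have pw: "(2::nat) ^ m j = 2 * 2 ^ (m j - 1)" using m2 by (cases "m j") auto
  have df: "fst (Qf m l (B2 j)) - snd (Qf m l (B2 j)) = 2 ^ m j - RR m l (Suc j)"
    unfolding Qf_def using Nj Rlt pw by simp
  show "2^(m j - 1) < fst (Qf m l (B2 j)) - snd (Qf m l (B2 j))" using df Rlt pw by simp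
  show "fst (Qf m l (B2 j)) - snd (Qf m l (B2 j)) < 2^(m j - 1 + 1)" using df Rpos pw m2 by simp
qed

lemma d_B3:
  assumes j: "j \<in> {2..l-1}"
  shows "2^(m j) < fst (Qf m l (B3 j)) - snd (Qf m l (B3 j))"
        "fst (Qf m l (B3 j)) - snd (Qf m l (B3 j)) < 2^(m j + 1)"
proof -
  have j2: "1 \<le> j" "j < l" using j l2 by auto
  have Nj: "(\<Sum>i=1..l. 2^m i) = 2 * SS m j + RR m l j" using N_j[OF mdec ml l2, of j] j2 by simp
  have df: "fst (Qf m l (B3 j)) - snd (Qf m l (B3 j)) = RR m l j" unfolding Qf_def using Nj by simp
  show "2^(m j) < fst (Qf m l (B3 j)) - snd (Qf m l (B3 j))" using df R_lower2[OF mdec ml j2] by simp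
  show "fst (Qf m l (B3 j)) - snd (Qf m l (B3 j)) < 2^(m j + 1)" using df R_bound[OF mdec ml, of j] j2 by simp
qed

lemma d_ge2_B2: "j \<in> {2..l-1} \<Longrightarrow> m (Suc j) + 1 < m j \<Longrightarrow> fst (Qf m l (B2 j)) - snd (Qf m l (B2 j)) \<ge> 2"
proof -
  assume a: "j \<in> {2..l-1}" "m (Suc j) + 1 < m j"
  have "(2::nat)^(m j - 1) \<ge> 1" by simp
  thus ?thesis using d_B2(1)[OF a] by linarith
qed

lemma d_ge2_B3: "j \<in> {2..l-1} \<Longrightarrow> fst (Qf m l (B3 j)) - snd (Qf m l (B3 j)) \<ge> 2"
proof -
  assume a: "j \<in> {2..l-1}"
  have "(2::nat)^(m j) \<ge> 1" by simp
  thus ?thesis using d_B3(1)[OF a] by linarith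
qed

lemma d_pos: "x \<in> L0 m l \<Longrightarrow> fst (Qf m l x) - snd (Qf m l x) \<ge> 1"
proof -
  assume "x \<in> L0 m l"
  then consider "x = B1" | j where "x = B2 j" "j \<in> {2..l-1}" "m (Suc j) + 1 < m j"
    | j where "x = B3 j" "j \<in> {2..l-1}" unfolding L0_def by blast
  thus ?thesis
  proof cases
    case 1 thus ?thesis using d_B1 by simp
  next
    case 2 thus ?thesis using d_B2(1)[of j] by simp
  next
    case 3 thus ?thesis using d_B3(1)[of j] by simp
  qed
qed

lemma m_inj: "i \<in> {1..l} \<Longrightarrow> j \<in> {1..l} \<Longrightarrow> m i = m j \<Longrightarrow> i = j"
proof (rule ccontr)
  assume h: "i \<in> {1..l}" "j \<in> {1..l}" "m i = m j" "i \<noteq> j"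
  then consider "i < j" | "j < i" by linarith
  thus False
  proof cases
    case 1 thus False using mono_m[OF mdec ml, of i j] h by simp
  next
    case 2 thus False using mono_m[OF mdec ml, of j i] h by simp
  qed
qed

lemma Qf_inj: "inj_on (Qf m l) (L0 m l)"
proof (rule inj_onI)
  fix x y assume x: "x \<in> L0 m l" and y: "y \<in> L0 m l" and e: "Qf m l x = Qf m l y"
  let ?d = "\<lambda>z. fst (Qf m l z) - snd (Qf m l z)"
  have de: "?d x = ?d y" using e by simp
  have cls: "\<And>z. z \<in> L0 m l \<Longrightarrow> z = B1 \<or> (\<exists>j. z = B2 j \<and> j \<in> {2..l-1} \<and> m (Suc j) + 1 < m j)
      \<or> (\<exists>j. z = B3 j \<and> j \<in> {2..l-1} \<and> m j + 1 < m (j-1))" unfolding L0_def by blast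
  have b2b3: False if "j \<in> {2..l-1}" "m (Suc j) + 1 < m j" "j' \<in> {2..l-1}" "m j' + 1 < m (j'-1)"
      "?d (B2 j) = ?d (B3 j')" for j j'
  proof -
    have h3: "2^(m j') < ?d (B2 j)" "?d (B2 j) < 2^(m j' + 1)" using d_B3[OF that(3)] that(5) by linarith+
    have "m j - 1 = m j'" using pow_interval_unique[OF d_B2(1,2)[OF that(1,2)] h3] .
    hence mj: "m j = m j' + 1" using d_B2(3)[OF that(1,2)] by simp
    have jl: "j \<le> l" "j' \<le> l" "1 \<le> j" "1 \<le> j'" using that(1,3) by auto
    consider "j < j'" | "j' < j" | "j = j'" by linarith
    thus False
    proof cases
      case 1
      have "m j' + (j' - j) \<le> m j" using mono_m[OF mdec ml, of j j'] 1 jl by simp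
      hence "j' = Suc j" using mj 1 by simp
      thus False using that(4) mj by simp
    next
      case 2
      have "m j + (j - j') \<le> m j'" using mono_m[OF mdec ml, of j' j] 2 jl by simp
      thus False using mj 2 by simp
    next
      case 3 thus False using mj by simp
    qed
  qed
  from cls[OF x] cls[OF y] show "x = y"
  proof (elim disjE exE conjE)
    assume "x = B1" "y = B1" thus ?thesis by simp
  next
    fix j assume h: "x = B1" "y = B2 j" "j \<in> {2..l-1}" "m (Suc j) + 1 < m j"
    have "?d B1 = ?d (B2 j)" using de by (simp only: h)
    moreover have "?d (B2 j) \<ge> 2" using d_ge2_B2 h(3,4) by blast
    ultimately show ?thesis using d_B1 by linarith
  next
    fix j assume h: "x = B1" "y = B3 j" "j \<in> {2..l-1}"
    have "?d B1 = ?d (B3 j)" using de by (simp only: h)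
    moreover have "?d (B3 j) \<ge> 2" using d_ge2_B3 h(3) by blast
    ultimately show ?thesis using d_B1 by linarith
  next
    fix j assume h: "y = B1" "x = B2 j" "j \<in> {2..l-1}" "m (Suc j) + 1 < m j"
    have "?d B1 = ?d (B2 j)" using de[symmetric] by (simp only: h)
    moreover have "?d (B2 j) \<ge> 2" using d_ge2_B2 h(3,4) by blast
    ultimately show ?thesis using d_B1 by linarith
  next
    fix j assume h: "y = B1" "x = B3 j" "j \<in> {2..l-1}"
    have "?d B1 = ?d (B3 j)" using de[symmetric] by (simp only: h)
    moreover have "?d (B3 j) \<ge> 2" using d_ge2_B3 h(3) by blast
    ultimately show ?thesis using d_B1 by linarith
  next
    fix j j' assume h: "x = B2 j" "j \<in> {2..l-1}" "m (Suc j) + 1 < m j"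
      "y = B2 j'" "j' \<in> {2..l-1}" "m (Suc j') + 1 < m j'"
    have dx: "?d x = ?d (B2 j')" using de by (simp only: h(4))
    have h3: "2^(m j' - 1) < ?d x" "?d x < 2^(m j' - 1 + 1)" using d_B2(1,2)[OF h(5,6)] dx by linarith+
    have "m j - 1 = m j' - 1" using pow_interval_unique[OF d_B2(1,2)[OF h(2,3)] h3[unfolded h(1)]] .
    moreover have "m j \<ge> 2" "m j' \<ge> 2" using d_B2(3)[OF h(2,3)] d_B2(3)[OF h(5,6)] by auto
    ultimately have mm: "m j = m j'" by arith
    have "j \<in> {1..l}" "j' \<in> {1..l}" using h(2) h(5) by auto
    hence "j = j'" using m_inj mm by blast
    thus ?thesis using h by simp
  next
    fix j j' assume h: "x = B3 j" "j \<in> {2..l-1}" "y = B3 j'" "j' \<in> {2..l-1}"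
    have dx: "?d x = ?d (B3 j')" using de by (simp only: h(3))
    have h3: "2^(m j') < ?d x" "?d x < 2^(m j' + 1)" using d_B3(1,2)[OF h(4)] dx by linarith+
    have mm: "m j = m j'" using pow_interval_unique[OF d_B3(1,2)[OF h(2)] h3[unfolded h(1)]] .
    have "j \<in> {1..l}" "j' \<in> {1..l}" using h(2) h(4) by auto
    hence "j = j'" using m_inj mm by blast
    thus ?thesis using h by simp
  next
    fix j j' assume h: "x = B2 j" "j \<in> {2..l-1}" "m (Suc j) + 1 < m j"
      "y = B3 j'" "j' \<in> {2..l-1}" "m j' + 1 < m (j'-1)"
    have "?d (B2 j) = ?d (B3 j')" using de by (simp only: h(1,4))
    thus ?thesis using b2b3[of j j'] h by blast
  next
    fix j j' assume h: "y = B2 j" "j \<in> {2..l-1}" "m (Suc j) + 1 < m j"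
      "x = B3 j'" "j' \<in> {2..l-1}" "m j' + 1 < m (j'-1)"
    have "?d (B2 j) = ?d (B3 j')" using de[symmetric] by (simp only: h(1,4))
    thus ?thesis using b2b3[of j j'] h by blast
  qed
qed

end

lemma part_b:
  fixes n k l :: nat and m :: "nat \<Rightarrow> nat"
  assumes mdec: "\<forall>i\<in>{1..<l}. m i > m (Suc i)"
    and ml: "m l = 0" and l2: "2 \<le> l"
    and nn: "n = 2^k * (\<Sum>i=1..l. 2 ^ m i)"
  shows "let s = (\<lambda>j. \<Sum>i=1..<j. (2::nat) ^ (m i - 1));
                P = (\<lambda>lab. case lab of
                        B1 \<Rightarrow> (2 ^ k * (s l + 1), 2 ^ k * s l)
                      | B2 j \<Rightarrow> (2 ^ k * (s j + 2 ^ m j), n - 2 ^ k * (s j + 2 ^ m j))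
                      | B3 j \<Rightarrow> (n - 2 ^ k * s j, 2 ^ k * s j)
                      | B4 \<Rightarrow> (n div 2, n div 2));
                L = {B1}
                    \<union> {B2 j | j. j \<in> {2..l-1} \<and> m j > m (Suc j) + 1}
                    \<union> {B3 j | j. j \<in> {2..l-1} \<and> m j + 1 < m (j - 1)}
                    \<union> (if k \<ge> 1 then {B4} else {})
            in QB n = P ` L \<and> inj_on P L"
proof -
  have mdec': "\<forall>i\<in>{1..<l}. m (Suc i) < m i" using mdec by simp
  let ?N = "\<Sum>i=1..l. (2::nat) ^ m i"
  define s where "s = (\<lambda>j. \<Sum>i=1..<j. (2::nat) ^ (m i - 1))"
  define P where "P = (\<lambda>lab. case lab of
                        B1 \<Rightarrow> (2 ^ k * (s l + 1), 2 ^ k * s l)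
                      | B2 j \<Rightarrow> (2 ^ k * (s j + 2 ^ m j), n - 2 ^ k * (s j + 2 ^ m j))
                      | B3 j \<Rightarrow> (n - 2 ^ k * s j, 2 ^ k * s j)
                      | B4 \<Rightarrow> (n div 2, n div 2))"
  define L where "L = {B1}
                    \<union> {B2 j | j. j \<in> {2..l-1} \<and> m j > m (Suc j) + 1}
                    \<union> {B3 j | j. j \<in> {2..l-1} \<and> m j + 1 < m (j - 1)}
                    \<union> (if k \<ge> 1 then {B4} else {})"
  define sc where "sc = (\<lambda>(a::nat,b::nat). (2^k*a, 2^k*b))"
  have sS: "s = SS m" unfolding s_def SS_def by (rule ext) simp
  have LL: "L = L0 m l \<union> (if k \<ge> 1 then {B4} else {})" unfolding L_def L0_def by simp
  have PQ: "\<And>x. x \<noteq> B4 \<Longrightarrow> P x = sc (Qf m l x)"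
  proof -
    fix x assume "x \<noteq> B4"
    thus "P x = sc (Qf m l x)"
      unfolding P_def sc_def Qf_def sS nn by (cases x) (simp_all add: diff_mult_distrib2)
  qed
  have B4L0: "B4 \<notin> L0 m l" unfolding L0_def by auto
  have N1: "?N \<ge> 1"
  proof -
    have "?N \<ge> 2 ^ m 1" by (rule member_le_sum) (use l2 in auto)
    moreover have "(2::nat) ^ m 1 \<ge> 1" by simp
    ultimately show ?thesis by linarith
  qed
  have QBn: "QB n = (if k \<ge> 1 then {(2^(k-1)*?N, 2^(k-1)*?N)} else {}) \<union> sc ` QB ?N"
    unfolding nn sc_def using QB_pow[OF N1] by simp
  have half: "k \<ge> 1 \<Longrightarrow> 2^(k-1)*?N = n div 2"
  proof -
    assume "k \<ge> 1"
    hence "n = 2 * (2^(k-1)*?N)" unfolding nn by (cases k) auto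
    thus ?thesis by simp
  qed
  have PL0: "P ` L0 m l = sc ` QB ?N"
    unfolding QB_odd_eq[OF mdec' ml l2] image_image by (intro image_cong refl) (metis PQ B4L0)
  have eq: "QB n = P ` L"
  proof (cases "k \<ge> 1")
    case True
    have "P B4 = (n div 2, n div 2)" unfolding P_def by simp
    thus ?thesis unfolding QBn LL image_Un PL0 using True half by auto
  next
    case False
    thus ?thesis unfolding QBn LL image_Un PL0 by simp
  qed
  have inj0: "inj_on P (L0 m l)"
  proof (rule inj_onI)
    fix x y assume x: "x \<in> L0 m l" and y: "y \<in> L0 m l" and e: "P x = P y"
    have "sc (Qf m l x) = sc (Qf m l y)" using e PQ x y B4L0 by metis
    hence "Qf m l x = Qf m l y" unfolding sc_def by (auto simp: case_prod_beta prod_eq_iff)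
    thus "x = y" using Qf_inj[OF mdec' ml l2] x y by (auto dest: inj_onD)
  qed
  have inj: "inj_on P L"
  proof (cases "k \<ge> 1")
    case False thus ?thesis unfolding LL using inj0 by simp
  next
    case True
    have "P B4 \<notin> P ` L0 m l"
    proof
      assume "P B4 \<in> P ` L0 m l"
      then obtain x where x: "x \<in> L0 m l" "P B4 = P x" by blast
      have "fst (Qf m l x) - snd (Qf m l x) \<ge> 1" using d_pos[OF mdec' ml l2 x(1)] .
      hence lt: "snd (Qf m l x) < fst (Qf m l x)" by simp
      have "P x = sc (Qf m l x)" using PQ x B4L0 by metis
      hence "snd (P x) < fst (P x)" using lt unfolding sc_def by (simp add: case_prod_beta)
      moreover have "fst (P B4) = snd (P B4)" unfolding P_def by simp
      ultimately show False using x(2) by simp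
    qed
    thus ?thesis unfolding LL using True inj0 B4L0 by simp
  qed
  show ?thesis using eq inj by (simp only: Let_def s_def P_def L_def)
qed

theorem proposition3:
  fixes n k l :: nat and m :: "nat \<Rightarrow> nat"
  assumes n2: "n \<ge> 2"
    and kdef: "2 ^ k dvd n" "\<not> 2 ^ Suc k dvd n"
    and l1: "l \<ge> 1"
    and mdec: "\<forall>i\<in>{1..<l}. m i > m (Suc i)"
    and ml: "m l = 0"
    and bin: "n div 2 ^ k = (\<Sum>i=1..l. 2 ^ m i)"
  shows "(l = 1 \<longrightarrow> QB n = {(n div 2, n div 2)}) \<and>
         (l > 1 \<longrightarrow>
           (let s = (\<lambda>j. \<Sum>i=1..<j. (2::nat) ^ (m i - 1));
                P = (\<lambda>lab. case lab of
                        B1 \<Rightarrow> (2 ^ k * (s l + 1), 2 ^ k * s l)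
                      | B2 j \<Rightarrow> (2 ^ k * (s j + 2 ^ m j), n - 2 ^ k * (s j + 2 ^ m j))
                      | B3 j \<Rightarrow> (n - 2 ^ k * s j, 2 ^ k * s j)
                      | B4 \<Rightarrow> (n div 2, n div 2));
                L = {B1}
                    \<union> {B2 j | j. j \<in> {2..l-1} \<and> m j > m (Suc j) + 1}
                    \<union> {B3 j | j. j \<in> {2..l-1} \<and> m j + 1 < m (j - 1)}
                    \<union> (if k \<ge> 1 then {B4} else {})
            in QB n = P ` L \<and> inj_on P L))"
proof -
  define n0 where "n0 = n div 2^k"
  have nn: "n = 2^k * n0" unfolding n0_def using kdef(1) by simp
  have n0pos: "n0 \<ge> 1" using nn n2 by (cases n0) auto
  show ?thesis
  proof (intro conjI impI)
    assume l1': "l = 1"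
    have "n0 = 1" using bin ml l1' unfolding n0_def by simp
    hence nk: "n = 2^k" using nn by simp
    have k1: "k \<ge> 1" using nk n2 by (cases k) auto
    have QB1: "QB 1 = {}" unfolding QB_char by auto
    have "QB n = {(2^(k-1), 2^(k-1))}" using QB_pow[of 1 k] k1 nk QB1 by simp
    moreover have "n div 2 = 2^(k-1)" using nk k1 by (cases k) auto
    ultimately show "QB n = {(n div 2, n div 2)}" by simp
  next
    assume "l > 1"
    hence l2: "2 \<le> l" by simp
    have nn2: "n = 2^k * (\<Sum>i=1..l. 2 ^ m i)" using nn bin unfolding n0_def by simp
    show "let s = (\<lambda>j. \<Sum>i=1..<j. (2::nat) ^ (m i - 1));
                P = (\<lambda>lab. case lab of
                        B1 \<Rightarrow> (2 ^ k * (s l + 1), 2 ^ k * s l)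
                      | B2 j \<Rightarrow> (2 ^ k * (s j + 2 ^ m j), n - 2 ^ k * (s j + 2 ^ m j))
                      | B3 j \<Rightarrow> (n - 2 ^ k * s j, 2 ^ k * s j)
                      | B4 \<Rightarrow> (n div 2, n div 2));
                L = {B1}
                    \<union> {B2 j | j. j \<in> {2..l-1} \<and> m j > m (Suc j) + 1}
                    \<union> {B3 j | j. j \<in> {2..l-1} \<and> m j + 1 < m (j - 1)}
                    \<union> (if k \<ge> 1 then {B4} else {})
            in QB n = P ` L \<and> inj_on P L"
      by (rule part_b[OF mdec ml l2 nn2])
  qed
qed


end
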